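(* Let $\mathbb{F}$ be a field and let $P_i(\lambda)\in \mathbb{F}[\lambda]^{m_i\times n}$, $i=1,\ldots,k$ ($k\ge 1$), be polynomial matrices such that $m:=\sum_{i=1}^k m_i\ge n$. Let $P(\lambda)\in\mathbb{F}[\lambda]^{m\times n}$ be the compound matrix obtained by stacking $P_1(\lambda),\ldots,P_k(\lambda)$ vertically, and assume $r:=\operatorname{rank}P(\lambda)\ge 1$ (normal rank). Then for $G(\lambda)\in\mathbb{F}[\lambda]^{r\times n}$ the following are equivalent: (1) $G(\lambda)$ is a compact GCRD of $\{P_i(\lambda)\}_{i=1}^k$; (2) there exists a left invertible polynomial matrix $N(\lambda)\in\mathbb{F}[\lambda]^{m\times r}$ such that $P(\lambda)=N(\lambda)G(\lambda)$; (3) there exists a unimodular matrix $U(\lambda)\in\mathbb{F}[\lambda]^{m\times m}$ such that $P(\lambda)=U(\lambda)\begin{bmatrix} G(\lambda)\\ 0\end{bmatrix}$. Moreover, any compact GCRD $G(\lambda)$ of $\{P_i(\lambda)\}_{i=1}^k$ can be written as $G(\lambda)=\sum_{i=1}^k L_i(\lambda)P_i(\lambda)$ for some polynomial matrices $L_i(\lambda)\in\mathbb{F}[\lambda]^{r\times m_i}$; equivalently, $G(\lambda)=L(\lambda)P(\lambda)$ for some $L(\lambda)\in\mathbb{F}[\lambda]^{r\times m}$.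
   Context: A matrix $D(\lambda)\in\mathbb{F}[\lambda]^{p\times n}$ is a common right divisor (CRD) of $\{P_i(\lambda)\}_{i=1}^k$ if there are polynomial matrices $Q_i(\lambda)\in\mathbb{F}[\lambda]^{m_i\times p}$ with $P_i(\lambda)=Q_i(\lambda)D(\lambda)$ for all $i$. A matrix $G(\lambda)\in\mathbb{F}[\lambda]^{\ell\times n}$ is a greatest common right divisor (GCRD) if it is a CRD and for every CRD $D(\lambda)\in\mathbb{F}[\lambda]^{p\times n}$ there is a polynomial $Q(\lambda)\in\mathbb{F}[\lambda]^{\ell\times p}$ with $G(\lambda)=Q(\lambda)D(\lambda)$. A GCRD (resp. CRD) with exactly $r$ rows, where $r$ is the normal rank of the compound matrix, is called compact. The normal rank is the rank over the field of fractions $\mathbb{F}(\lambda)$. A square polynomial matrix is unimodular if its determinant is a nonzero constant; $N(\lambda)$ is left invertible if there is a polynomial matrix $L(\lambda)$ with $L(\lambda)N(\lambda)=I$. *)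

theory Defs
  imports "Jordan_Normal_Form.DL_Rank" "Jordan_Normal_Form.Determinant"
    "HOL-Computational_Algebra.Polynomial" "HOL-Computational_Algebra.Fraction_Field"
begin

definition stack :: "nat \<Rightarrow> 'a::zero mat list \<Rightarrow> 'a mat" where
  "stack n Ps = foldr (\<lambda>A B. A @\<^sub>r B) Ps (0\<^sub>m 0 n)"

definition normal_rank :: "'a::field poly mat \<Rightarrow> nat" where
  "normal_rank A = vec_space.rank (dim_row A) (map_mat to_fract A)"

definition is_CRD :: "nat \<Rightarrow> 'a::comm_ring_1 mat list \<Rightarrow> 'a mat \<Rightarrow> bool" where
  "is_CRD n Ps D \<longleftrightarrow> dim_col D = n \<and>
     (\<forall>P \<in> set Ps. \<exists>Q \<in> carrier_mat (dim_row P) (dim_row D). P = Q * D)"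

definition is_GCRD :: "nat \<Rightarrow> 'a::comm_ring_1 mat list \<Rightarrow> 'a mat \<Rightarrow> bool" where
  "is_GCRD n Ps G \<longleftrightarrow> is_CRD n Ps G \<and>
     (\<forall>D. is_CRD n Ps D \<longrightarrow> (\<exists>Q \<in> carrier_mat (dim_row G) (dim_row D). G = Q * D))"

definition is_compact_GCRD :: "nat \<Rightarrow> 'a::field poly mat list \<Rightarrow> 'a poly mat \<Rightarrow> bool" where
  "is_compact_GCRD n Ps G \<longleftrightarrow> is_GCRD n Ps G \<and> dim_row G = normal_rank (stack n Ps)"

definition unimodular :: "'a::field poly mat \<Rightarrow> bool" where
  "unimodular U \<longleftrightarrow> dim_row U = dim_col U \<and> det U \<noteq> 0 \<and> degree (det U) = 0"

definition left_invertible :: "'a::comm_ring_1 mat \<Rightarrow> bool" where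
  "left_invertible N \<longleftrightarrow>
     (\<exists>L \<in> carrier_mat (dim_col N) (dim_row N). L * N = 1\<^sub>m (dim_col N))"

end

theory Submission
  imports Defs
begin

lemma sum_single_nz:
  assumes "finite S" "i \<in> S" "\<And>k. k \<in> S \<Longrightarrow> k \<noteq> i \<Longrightarrow> f k = 0"
  shows "sum f S = f i"
proof -
  have "sum f S = f i + sum f (S - {i})" using assms by (simp add: sum.remove)
  also have "sum f (S - {i}) = 0" using assms by (intro sum.neutral) auto
  finally show ?thesis by simp
qed

lemma sum_two_nz:
  assumes "finite S" "i \<in> S" "j \<in> S" "i \<noteq> j" "\<And>k. k \<in> S \<Longrightarrow> k \<noteq> i \<Longrightarrow> k \<noteq> j \<Longrightarrow> f k = 0"
  shows "sum f S = f i + f j"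
proof -
  have "sum f S = f i + sum f (S - {i})" using assms by (simp add: sum.remove)
  also have "sum f (S - {i}) = f j" using assms by (intro sum_single_nz) auto
  finally show ?thesis .
qed

lemma mult_entry:
  assumes "M \<in> carrier_mat m k" "A \<in> carrier_mat k c" "a < m" "b < c"
  shows "(M * A) $$ (a,b) = (\<Sum>i\<in>{0..<k}. M $$ (a,i) * A $$ (i,b))"
  using assms by (auto simp: scalar_prod_def intro: sum.cong)

definition invm :: "nat \<Rightarrow> 'a::comm_ring_1 mat \<Rightarrow> bool" where
  "invm m V \<longleftrightarrow> V \<in> carrier_mat m m \<and> (\<exists>W\<in>carrier_mat m m. V * W = 1\<^sub>m m \<and> W * V = 1\<^sub>m m)"

lemma invm_mult:
  assumes "invm m A" "invm m B" shows "invm m (A * B)"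
proof -
  from assms obtain WA WB where A: "A \<in> carrier_mat m m" "WA \<in> carrier_mat m m" "A * WA = 1\<^sub>m m" "WA * A = 1\<^sub>m m"
    and B: "B \<in> carrier_mat m m" "WB \<in> carrier_mat m m" "B * WB = 1\<^sub>m m" "WB * B = 1\<^sub>m m"
    unfolding invm_def by blast
  have "(A * B) * (WB * WA) = A * (B * (WB * WA))" using A B by (intro assoc_mult_mat) auto
  also have "B * (WB * WA) = (B * WB) * WA" using A B by (intro assoc_mult_mat[symmetric]) auto
  finally have 1: "(A * B) * (WB * WA) = 1\<^sub>m m" using A B by simp
  have "(WB * WA) * (A * B) = WB * (WA * (A * B))" using A B by (intro assoc_mult_mat) auto
  also have "WA * (A * B) = (WA * A) * B" using A B by (intro assoc_mult_mat[symmetric]) auto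
  finally have 2: "(WB * WA) * (A * B) = 1\<^sub>m m" using A B by simp
  show ?thesis unfolding invm_def using 1 2 A B by (intro conjI bexI[of _ "WB * WA"]) auto
qed

definition mat2op :: "nat \<Rightarrow> nat \<Rightarrow> nat \<Rightarrow> 'a::comm_ring_1 \<Rightarrow> 'a \<Rightarrow> 'a \<Rightarrow> 'a \<Rightarrow> 'a mat" where
  "mat2op m i j s t u v = mat m m (\<lambda>(a,b). if a = i then (if b = i then s else if b = j then t else 0)
     else if a = j then (if b = i then u else if b = j then v else 0) else if a = b then 1 else 0)"

lemma mat2op_carrier[simp]: "mat2op m i j s t u v \<in> carrier_mat m m"
  unfolding mat2op_def by auto

lemma mat2op_mult:
  assumes A: "A \<in> carrier_mat m c" and ij: "i < m" "j < m" "i \<noteq> j"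
  shows "mat2op m i j s t u v * A = mat m c (\<lambda>(a,b). if a = i then s * A $$ (i,b) + t * A $$ (j,b)
     else if a = j then u * A $$ (i,b) + v * A $$ (j,b) else A $$ (a,b))"
proof (rule eq_matI)
  fix a b assume a: "a < dim_row (mat m c (\<lambda>(a,b). if a = i then s * A $$ (i,b) + t * A $$ (j,b)
     else if a = j then u * A $$ (i,b) + v * A $$ (j,b) else A $$ (a,b)))"
    and b: "b < dim_col (mat m c (\<lambda>(a,b). if a = i then s * A $$ (i,b) + t * A $$ (j,b)
     else if a = j then u * A $$ (i,b) + v * A $$ (j,b) else A $$ (a,b)))"
  hence a: "a < m" and b: "b < c" by auto
  have e: "(mat2op m i j s t u v * A) $$ (a,b) = (\<Sum>k\<in>{0..<m}. mat2op m i j s t u v $$ (a,k) * A $$ (k,b))"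
    by (rule mult_entry[OF mat2op_carrier A a b])
  show "(mat2op m i j s t u v * A) $$ (a,b) = mat m c (\<lambda>(a,b). if a = i then s * A $$ (i,b) + t * A $$ (j,b)
     else if a = j then u * A $$ (i,b) + v * A $$ (j,b) else A $$ (a,b)) $$ (a,b)"
  proof (cases "a = i \<or> a = j")
    case True
    have "(\<Sum>k\<in>{0..<m}. mat2op m i j s t u v $$ (a,k) * A $$ (k,b)) =
       mat2op m i j s t u v $$ (a,i) * A $$ (i,b) + mat2op m i j s t u v $$ (a,j) * A $$ (j,b)"
      using ij a True by (intro sum_two_nz) (auto simp: mat2op_def)
    then show ?thesis using e ij a b True by (auto simp: mat2op_def)
  next
    case False
    have "(\<Sum>k\<in>{0..<m}. mat2op m i j s t u v $$ (a,k) * A $$ (k,b)) =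
       mat2op m i j s t u v $$ (a,a) * A $$ (a,b)"
      using ij a False by (intro sum_single_nz) (auto simp: mat2op_def)
    then show ?thesis using e ij a b False by (auto simp: mat2op_def)
  qed
qed (insert A, auto simp: mat2op_def)

lemma mat2op_inv:
  assumes ij: "i < m" "j < m" "i \<noteq> j" and d: "s * v - t * u = 1"
  shows "invm m (mat2op m i j s t u v)"
proof -
  let ?M = "mat2op m i j s t u v" and ?W = "mat2op m i j v (-t) (-u) s"
  have "?M * ?W = 1\<^sub>m m"
    by (subst mat2op_mult[OF mat2op_carrier ij], rule eq_matI)
      (insert ij d, auto simp: mat2op_def algebra_simps)
  moreover have "?W * ?M = 1\<^sub>m m"
    by (subst mat2op_mult[OF mat2op_carrier ij], rule eq_matI)
      (insert ij d, auto simp: mat2op_def algebra_simps)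
  ultimately show ?thesis unfolding invm_def by auto
qed

definition colop :: "nat \<Rightarrow> nat \<Rightarrow> 'a::comm_ring_1 \<Rightarrow> (nat \<Rightarrow> 'a) \<Rightarrow> 'a mat" where
  "colop m j d x = mat m m (\<lambda>(a,b). if a = j then (if b = j then d else 0)
     else if a = b then 1 else if b = j then x a else 0)"

lemma colop_carrier[simp]: "colop m j d x \<in> carrier_mat m m"
  unfolding colop_def by auto

lemma colop_mult:
  assumes A: "A \<in> carrier_mat m c" and j: "j < m"
  shows "colop m j d x * A = mat m c (\<lambda>(a,b). if a = j then d * A $$ (j,b) else A $$ (a,b) + x a * A $$ (j,b))"
proof (rule eq_matI)
  fix a b assume "a < dim_row (mat m c (\<lambda>(a,b). if a = j then d * A $$ (j,b) else A $$ (a,b) + x a * A $$ (j,b)))"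
    "b < dim_col (mat m c (\<lambda>(a,b). if a = j then d * A $$ (j,b) else A $$ (a,b) + x a * A $$ (j,b)))"
  hence a: "a < m" and b: "b < c" by auto
  have e: "(colop m j d x * A) $$ (a,b) = (\<Sum>k\<in>{0..<m}. colop m j d x $$ (a,k) * A $$ (k,b))"
    by (rule mult_entry[OF colop_carrier A a b])
  show "(colop m j d x * A) $$ (a,b) = mat m c (\<lambda>(a,b). if a = j then d * A $$ (j,b) else A $$ (a,b) + x a * A $$ (j,b)) $$ (a,b)"
  proof (cases "a = j")
    case True
    have "(\<Sum>k\<in>{0..<m}. colop m j d x $$ (a,k) * A $$ (k,b)) = colop m j d x $$ (a,j) * A $$ (j,b)"
      using j a True by (intro sum_single_nz) (auto simp: colop_def)
    then show ?thesis using e j a b True by (auto simp: colop_def)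
  next
    case False
    have "(\<Sum>k\<in>{0..<m}. colop m j d x $$ (a,k) * A $$ (k,b)) =
       colop m j d x $$ (a,a) * A $$ (a,b) + colop m j d x $$ (a,j) * A $$ (j,b)"
      using j a False by (intro sum_two_nz) (auto simp: colop_def)
    then show ?thesis using e j a b False by (auto simp: colop_def)
  qed
qed (insert A, auto simp: colop_def)

lemma colop_inv:
  assumes j: "j < m" and d: "d * e = 1"
  shows "invm m (colop m j d (\<lambda>a. - (x a * d)))"
proof -
  let ?M = "colop m j d (\<lambda>a. - (x a * d))" and ?W = "colop m j e x"
  have de: "d * (e * y) = y" "e * (d * y) = y" for y by (metis d mult.assoc mult_1 mult.commute)+
  have "?M * ?W = 1\<^sub>m m"
    by (subst colop_mult[OF colop_carrier j], rule eq_matI)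
      (insert j d, auto simp: colop_def algebra_simps de)
  moreover have "?W * ?M = 1\<^sub>m m"
    by (subst colop_mult[OF colop_carrier j], rule eq_matI)
      (insert j d, auto simp: colop_def algebra_simps de)
  ultimately show ?thesis unfolding invm_def by auto
qed

lemma bezout2:
  fixes p q :: "'a::field poly"
  shows "\<exists>s t u v. s*v - t*u = 1 \<and> u*p + v*q = 0"
proof (induction q arbitrary: p rule: measure_induct_rule[of euclidean_size])
  case (less q p)
  show ?case
  proof (cases "q = 0")
    case True then show ?thesis by (intro exI[of _ 1] exI[of _ 0]) simp
  next
    case False
    then have "euclidean_size (p mod q) < euclidean_size q" by (rule mod_size_less)
    from less[OF this, of q] obtain s' t' u' v' where h: "s'*v' - t'*u' = 1" "u'*q + v'*(p mod q) = 0" by blast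
    have pm: "p mod q = p - (p div q) * q" by (simp add: minus_div_mult_eq_mod)
    show ?thesis
      by (intro exI[of _ "-t'"] exI[of _ "t'*(p div q) - s'"] exI[of _ v'] exI[of _ "u' - v'*(p div q)"])
        (use h pm in \<open>auto simp: algebra_simps\<close>)
  qed
qed

lemma invm_one[simp]: "invm m (1\<^sub>m m)"
  unfolding invm_def by (intro conjI bexI[of _ "1\<^sub>m m"]) auto

lemma clear_below:
  fixes A :: "'a::field poly mat"
  assumes A: "A \<in> carrier_mat m c" and j: "j < m" "j < c"
  shows "j + 1 + d \<le> m \<Longrightarrow> \<exists>V. invm m V \<and> (\<forall>k. j < k \<and> k < j+1+d \<longrightarrow> (V*A)$$(k,j) = 0)
     \<and> (\<forall>b<c. (\<forall>k. j \<le> k \<and> k < m \<longrightarrow> A$$(k,b) = 0) \<longrightarrow> (\<forall>k. j \<le> k \<and> k < m \<longrightarrow> (V*A)$$(k,b) = 0))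
     \<and> (\<forall>k<j. \<forall>b<c. (V*A)$$(k,b) = A$$(k,b))"
proof (induction d)
  case 0
  show ?case by (intro exI[of _ "1\<^sub>m m"]) (use A in auto)
next
  case (Suc d)
  then obtain V where V: "invm m V" and V1: "\<forall>k. j < k \<and> k < j+1+d \<longrightarrow> (V*A)$$(k,j) = 0"
    and V2: "\<forall>b<c. (\<forall>k. j \<le> k \<and> k < m \<longrightarrow> A$$(k,b) = 0) \<longrightarrow> (\<forall>k. j \<le> k \<and> k < m \<longrightarrow> (V*A)$$(k,b) = 0)"
    and V3: "\<forall>k<j. \<forall>b<c. (V*A)$$(k,b) = A$$(k,b)" by auto
  define B where "B = V * A"
  have Vc: "V \<in> carrier_mat m m" using V unfolding invm_def by auto
  have B: "B \<in> carrier_mat m c" using Vc A unfolding B_def by auto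
  define k' where "k' = j + 1 + d"
  have k': "k' < m" "j \<noteq> k'" using Suc.prems unfolding k'_def by auto
  obtain s t u v where st: "s*v - t*u = 1" "u * B$$(j,j) + v * B$$(k',j) = 0"
    using bezout2 by blast
  define M where "M = mat2op m j k' s t u v"
  have M: "invm m M" unfolding M_def by (rule mat2op_inv[OF j(1) k' st(1)])
  have MB: "M * B = mat m c (\<lambda>(a,b). if a = j then s * B $$ (j,b) + t * B $$ (k',b)
     else if a = k' then u * B $$ (j,b) + v * B $$ (k',b) else B $$ (a,b))"
    unfolding M_def by (rule mat2op_mult[OF B j(1) k'])
  have Mc: "M \<in> carrier_mat m m" unfolding M_def by simp
  have eq: "(M * V) * A = M * B" unfolding B_def by (rule assoc_mult_mat[OF Mc Vc A])
  show ?case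
  proof (intro exI[of _ "M * V"] conjI allI impI)
    show "invm m (M * V)" by (rule invm_mult[OF M V])
  next
    fix k assume "j < k \<and> k < j + 1 + Suc d"
    then show "(M * V * A) $$ (k, j) = 0" unfolding eq MB using V1 st j k' unfolding B_def k'_def
      by (cases "k = j + 1 + d") auto
  next
    fix b k assume b: "b < c" and z: "\<forall>k. j \<le> k \<and> k < m \<longrightarrow> A $$ (k, b) = 0" and k: "j \<le> k \<and> k < m"
    have zb: "\<forall>k. j \<le> k \<and> k < m \<longrightarrow> B $$ (k, b) = 0" using V2 b z unfolding B_def by blast
    show "(M * V * A) $$ (k, b) = 0" unfolding eq MB using zb k b j k' unfolding k'_def by auto
  next
    fix k b assume k: "k < j" and b: "b < c"
    show "(M * V * A) $$ (k, b) = A $$ (k, b)" unfolding eq MB using V3 k b j k' unfolding B_def k'_def by auto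
  qed
qed

lemma left_inv_reduce:
  fixes N :: "'a::field poly mat"
  assumes N: "N \<in> carrier_mat m r" and L: "L \<in> carrier_mat r m" and LN: "L * N = 1\<^sub>m r" and rm: "r \<le> m"
  shows "\<exists>V. invm m V \<and> V * N = mat m r (\<lambda>(i,j). if i = j then 1 else 0)"
proof -
  have main: "j \<le> r \<Longrightarrow> \<exists>V. invm m V \<and> (\<forall>a<m. \<forall>b<j. (V*N)$$(a,b) = (if a = b then 1 else 0))" for j
  proof (induction j)
    case 0
    show ?case by (intro exI[of _ "1\<^sub>m m"]) auto
  next
    case (Suc j)
    then have jr: "j < r" and jm: "j < m" using rm by auto
    from Suc obtain V where V: "invm m V" and VN: "\<forall>a<m. \<forall>b<j. (V*N)$$(a,b) = (if a = b then 1 else 0)"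
      by auto
    from V obtain W where Vc: "V \<in> carrier_mat m m" and Wc: "W \<in> carrier_mat m m" and WV: "W * V = 1\<^sub>m m"
      unfolding invm_def by auto
    define A where "A = V * N"
    have A: "A \<in> carrier_mat m r" unfolding A_def using Vc N by auto
    define L1 where "L1 = L * W"
    have L1: "L1 \<in> carrier_mat r m" unfolding L1_def using L Wc by auto
    have "L1 * A = L * (W * (V * N))" unfolding L1_def A_def
      by (rule assoc_mult_mat[OF L Wc], use Vc N in auto)
    also have "W * (V * N) = (W * V) * N" by (rule assoc_mult_mat[symmetric, OF Wc Vc N])
    finally have L1A: "L1 * A = 1\<^sub>m r" using WV N LN by simp
    obtain V1 where V1: "invm m V1" and C1: "\<forall>k. j < k \<and> k < j+1+(m-j-1) \<longrightarrow> (V1*A)$$(k,j) = 0"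
      and C2: "\<forall>b<r. (\<forall>k. j \<le> k \<and> k < m \<longrightarrow> A$$(k,b) = 0) \<longrightarrow> (\<forall>k. j \<le> k \<and> k < m \<longrightarrow> (V1*A)$$(k,b) = 0)"
      and C3: "\<forall>k<j. \<forall>b<r. (V1*A)$$(k,b) = A$$(k,b)"
      using clear_below[OF A jm jr, of "m - j - 1"] jm by auto
    from V1 obtain W1 where V1c: "V1 \<in> carrier_mat m m" and W1c: "W1 \<in> carrier_mat m m" and WV1: "W1 * V1 = 1\<^sub>m m"
      unfolding invm_def by auto
    define A1 where "A1 = V1 * A"
    have A1: "A1 \<in> carrier_mat m r" unfolding A1_def using V1c A by auto
    define L2 where "L2 = L1 * W1"
    have L2: "L2 \<in> carrier_mat r m" unfolding L2_def using L1 W1c by auto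
    have "L2 * A1 = L1 * (W1 * (V1 * A))" unfolding L2_def A1_def
      by (rule assoc_mult_mat[OF L1 W1c], use V1c A in auto)
    also have "W1 * (V1 * A) = (W1 * V1) * A" by (rule assoc_mult_mat[symmetric, OF W1c V1c A])
    finally have L2A: "L2 * A1 = 1\<^sub>m r" using WV1 A L1A by simp
    have A1below: "A1 $$ (k,j) = 0" if "j < k" "k < m" for k
      using C1 that unfolding A1_def by auto
    have A1col: "A1 $$ (a,b) = (if a = b then 1 else 0)" if "a < m" "b < j" for a b
    proof (cases "a < j")
      case True
      then show ?thesis using C3 VN that jr unfolding A1_def A_def by auto
    next
      case False
      have "\<forall>k. j \<le> k \<and> k < m \<longrightarrow> A$$(k,b) = 0" using VN that unfolding A_def by auto
      then have "A1 $$ (a,b) = 0" using C2 that False jr unfolding A1_def by auto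
      then show ?thesis using False that by auto
    qed
    have L2row: "L2 $$ (j,b) = 0" if "b < j" for b
    proof -
      have "(L2 * A1) $$ (j,b) = (\<Sum>k\<in>{0..<m}. L2 $$ (j,k) * A1 $$ (k,b))"
        by (rule mult_entry[OF L2 A1], use jr that in auto)
      also have "\<dots> = L2 $$ (j,b) * A1 $$ (b,b)"
        by (rule sum_single_nz, use that jm A1col in auto)
      also have "\<dots> = L2 $$ (j,b)" using A1col that jm by auto
      finally show ?thesis using L2A that jr by auto
    qed
    define c where "c = L2 $$ (j,j)"
    define g where "g = A1 $$ (j,j)"
    have "(L2 * A1) $$ (j,j) = (\<Sum>k\<in>{0..<m}. L2 $$ (j,k) * A1 $$ (k,j))"
      by (rule mult_entry[OF L2 A1], use jr in auto)
    also have "\<dots> = L2 $$ (j,j) * A1 $$ (j,j)"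
    proof (rule sum_single_nz)
      fix k assume "k \<in> {0..<m}" "k \<noteq> j"
      then show "L2 $$ (j, k) * A1 $$ (k, j) = 0"
        using L2row A1below by (cases "k < j") auto
    qed (use jm in auto)
    finally have cg: "c * g = 1" using L2A jr unfolding c_def g_def by auto
    define E where "E = colop m j c (\<lambda>a. - (A1 $$ (a,j) * c))"
    have E: "invm m E" unfolding E_def by (rule colop_inv[OF jm cg])
    have Ec: "E \<in> carrier_mat m m" unfolding E_def by simp
    have EA1: "E * A1 = mat m r (\<lambda>(a,b). if a = j then c * A1 $$ (j,b) else A1 $$ (a,b) + (- (A1 $$ (a,j) * c)) * A1 $$ (j,b))"
      unfolding E_def by (rule colop_mult[OF A1 jm])
    have eq: "(E * (V1 * V)) * N = E * A1"
    proof -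
      have "(E * (V1 * V)) * N = E * ((V1 * V) * N)" by (rule assoc_mult_mat[OF Ec _ N], use V1c Vc in auto)
      also have "(V1 * V) * N = V1 * (V * N)" by (rule assoc_mult_mat[OF V1c Vc N])
      finally show ?thesis unfolding A1_def A_def .
    qed
    show ?case
    proof (intro exI[of _ "E * (V1 * V)"] conjI allI impI)
      show "invm m (E * (V1 * V))" by (intro invm_mult E V1 V)
    next
      fix a b assume a: "a < m" and b: "b < Suc j"
      have gcol: "A1 $$ (j,b) = (if j = b then 1 else 0) \<or> b = j" using A1col[OF jm] b by auto
      show "(E * (V1 * V) * N) $$ (a, b) = (if a = b then 1 else 0)"
      proof (cases "b = j")
        case True
        then show ?thesis unfolding eq EA1 using a jr cg unfolding g_def
          by (auto simp: algebra_simps)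
      next
        case False
        then have "b < j" using b by auto
        then show ?thesis unfolding eq EA1 using a jr A1col[OF a] A1col[OF jm] by auto
      qed
    qed
  qed
  from main[of r] obtain V where V: "invm m V" and VN: "\<forall>a<m. \<forall>b<r. (V*N)$$(a,b) = (if a = b then 1 else 0)"
    by auto
  have Vc: "V \<in> carrier_mat m m" using V unfolding invm_def by auto
  show ?thesis
    by (intro exI[of _ V] conjI V eq_matI) (use VN Vc N in auto)
qed

lemma append_rows_index:
  assumes "A \<in> carrier_mat p c" "B \<in> carrier_mat q c" "i < p + q" "j < c"
  shows "(A @\<^sub>r B) $$ (i,j) = (if i < p then A $$ (i,j) else B $$ (i - p, j))"
  using assms unfolding append_rows_def by auto

lemma append_rows_mult:
  assumes A: "A \<in> carrier_mat p k" and B: "B \<in> carrier_mat q k" and D: "D \<in> carrier_mat k c"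
  shows "(A @\<^sub>r B) * D = (A * D) @\<^sub>r (B * D)"
proof (rule eq_matI)
  have AB: "A @\<^sub>r B \<in> carrier_mat (p+q) k" using A B by auto
  have R: "(A * D) @\<^sub>r (B * D) \<in> carrier_mat (p+q) c" using A B D by auto
  fix i j assume i: "i < dim_row ((A * D) @\<^sub>r (B * D))" and j: "j < dim_col ((A * D) @\<^sub>r (B * D))"
  then have i: "i < p + q" and j: "j < c" using R by auto
  have "((A @\<^sub>r B) * D) $$ (i,j) = (\<Sum>l\<in>{0..<k}. (A @\<^sub>r B) $$ (i,l) * D $$ (l,j))"
    by (rule mult_entry[OF AB D i j])
  also have "\<dots> = (\<Sum>l\<in>{0..<k}. (if i < p then A $$ (i,l) else B $$ (i-p,l)) * D $$ (l,j))"
    by (rule sum.cong, simp, subst append_rows_index[OF A B i], auto)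
  also have "\<dots> = ((A * D) @\<^sub>r (B * D)) $$ (i,j)"
    using i j A B D by (subst append_rows_index[of _ p c _ q], auto simp: scalar_prod_def)
  finally show "((A @\<^sub>r B) * D) $$ (i,j) = ((A * D) @\<^sub>r (B * D)) $$ (i,j)" .
qed (use A B D in \<open>auto simp: append_rows_def\<close>)

lemma append_rows_inj:
  assumes A: "A \<in> carrier_mat p c" "A' \<in> carrier_mat p c" and B: "B \<in> carrier_mat q c" "B' \<in> carrier_mat q c"
    and eq: "A @\<^sub>r B = A' @\<^sub>r B'"
  shows "A = A' \<and> B = B'"
proof
  show "A = A'"
  proof (rule eq_matI)
    fix i j assume "i < dim_row A'" "j < dim_col A'"
    then have i: "i < p" "i < p + q" and j: "j < c" using A by auto
    have "(A @\<^sub>r B) $$ (i,j) = (A' @\<^sub>r B') $$ (i,j)" using eq by simp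
    then show "A $$ (i,j) = A' $$ (i,j)"
      using append_rows_index[OF A(1) B(1) i(2) j] append_rows_index[OF A(2) B(2) i(2) j] i by simp
  qed (use A in auto)
  show "B = B'"
  proof (rule eq_matI)
    fix i j assume "i < dim_row B'" "j < dim_col B'"
    then have i: "i + p < p + q" and j: "j < c" using B by auto
    have "(A @\<^sub>r B) $$ (i+p,j) = (A' @\<^sub>r B') $$ (i+p,j)" using eq by simp
    then show "B $$ (i,j) = B' $$ (i,j)"
      using append_rows_index[OF A(1) B(1) i j] append_rows_index[OF A(2) B(2) i j] by simp
  qed (use B in auto)
qed

lemma stack_Nil[simp]: "stack n [] = 0\<^sub>m 0 n"
  unfolding stack_def by simp
lemma stack_Cons[simp]: "stack n (P # Ps) = P @\<^sub>r stack n Ps"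
  unfolding stack_def by simp
lemma stack_carrier:
  assumes "\<forall>P\<in>set Ps. dim_col P = n"
  shows "stack n Ps \<in> carrier_mat (sum_list (map dim_row Ps)) n"
  using assms
proof (induction Ps)
  case (Cons P Ps)
  have dc: "dim_col P = n" by (rule bspec[OF Cons.prems]) simp
  have P: "P \<in> carrier_mat (dim_row P) n" by (rule carrier_matI) (simp_all add: dc)
  have S: "stack n Ps \<in> carrier_mat (sum_list (map dim_row Ps)) n"
    by (rule Cons.IH) (use Cons.prems in simp)
  have "P @\<^sub>r stack n Ps \<in> carrier_mat (dim_row P + sum_list (map dim_row Ps)) n"
    by (rule carrier_append_rows[OF P S])
  then show ?case by simp
next
  case Nil show ?case by simp
qed

lemma stack_mult:
  assumes "\<forall>P\<in>set Ps. Qf P \<in> carrier_mat (dim_row P) p \<and> P = Qf P * D" and D: "D \<in> carrier_mat p n"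
  shows "stack n Ps = stack p (map Qf Ps) * D"
  using assms(1)
proof (induction Ps)
  case Nil
  show ?case by (rule eq_matI) (use D in auto)
next
  case (Cons P Ps)
  have dc: "\<forall>X\<in>set (map Qf Ps). dim_col X = p"
  proof
    fix X assume "X \<in> set (map Qf Ps)"
    then obtain P' where P': "P' \<in> set Ps" "X = Qf P'" by auto
    have m: "P' \<in> set (P # Ps)" using P'(1) by simp
    have "Qf P' \<in> carrier_mat (dim_row P') p" by (rule conjunct1[OF bspec[OF Cons.prems m]])
    then show "dim_col X = p" using P' by simp
  qed
  have S: "stack p (map Qf Ps) \<in> carrier_mat (sum_list (map dim_row (map Qf Ps))) p"
    by (rule stack_carrier[OF dc])
  have PH: "Qf P \<in> carrier_mat (dim_row P) p \<and> P = Qf P * D" by (rule bspec[OF Cons.prems]) simp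
  have Q: "Qf P \<in> carrier_mat (dim_row P) p" by (rule conjunct1[OF PH])
  have P: "P = Qf P * D" by (rule conjunct2[OF PH])
  have R: "\<forall>P'\<in>set Ps. Qf P' \<in> carrier_mat (dim_row P') p \<and> P' = Qf P' * D"
  proof
    fix P' assume "P' \<in> set Ps"
    then have m: "P' \<in> set (P # Ps)" by simp
    show "Qf P' \<in> carrier_mat (dim_row P') p \<and> P' = Qf P' * D" by (rule bspec[OF Cons.prems m])
  qed
  have IH: "stack n Ps = stack p (map Qf Ps) * D" by (rule Cons.IH[OF R])
  have e1: "stack p (map Qf (P # Ps)) * D = (Qf P * D) @\<^sub>r (stack p (map Qf Ps) * D)"
    unfolding list.map stack_Cons by (rule append_rows_mult[OF Q S D])
  have e2: "stack n (P # Ps) = (Qf P * D) @\<^sub>r (stack p (map Qf Ps) * D)"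
    unfolding stack_Cons IH[symmetric] by (rule arg_cong[where f="\<lambda>x. x @\<^sub>r stack n Ps", OF P])
  show ?case unfolding e1 e2 ..
qed

lemma stack_split:
  assumes "\<forall>P\<in>set Ps. dim_col P = n" and "N \<in> carrier_mat (sum_list (map dim_row Ps)) p"
    and D: "D \<in> carrier_mat p n" and "stack n Ps = N * D"
  shows "\<forall>P\<in>set Ps. \<exists>Q\<in>carrier_mat (dim_row P) p. P = Q * D"
  using assms(1,2,4)
proof (induction Ps arbitrary: N)
  case Nil then show ?case by simp
next
  case (Cons P Ps)
  define h where "h = dim_row P"
  define q where "q = sum_list (map dim_row Ps)"
  have dcP: "dim_col P = n" by (rule bspec[OF Cons.prems(1)]) simp
  have dcs: "\<forall>P'\<in>set Ps. dim_col P' = n"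
  proof
    fix P' assume "P' \<in> set Ps"
    then show "dim_col P' = n" by (intro bspec[OF Cons.prems(1)]) simp
  qed
  have N: "N \<in> carrier_mat (h + q) p" using Cons.prems(2) unfolding h_def q_def by simp
  define N1 where "N1 = mat h p (\<lambda>(i,j). N $$ (i,j))"
  define N2 where "N2 = mat q p (\<lambda>(i,j). N $$ (i + h,j))"
  have N1: "N1 \<in> carrier_mat h p" and N2: "N2 \<in> carrier_mat q p" unfolding N1_def N2_def by auto
  have N12: "N1 @\<^sub>r N2 \<in> carrier_mat (h+q) p" using N1 N2 by auto
  have NN: "N = N1 @\<^sub>r N2"
  proof (rule eq_matI)
    fix i j assume "i < dim_row (N1 @\<^sub>r N2)" "j < dim_col (N1 @\<^sub>r N2)"
    then have i: "i < h+q" "j < p" using N12 by auto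
    show "N $$ (i,j) = (N1 @\<^sub>r N2) $$ (i,j)"
      using append_rows_index[OF N1 N2 i] i N by (auto simp: N1_def N2_def)
  qed (use N N12 in auto)
  have P: "P \<in> carrier_mat h n" unfolding h_def by (rule carrier_matI) (simp_all add: dcP)
  have S: "stack n Ps \<in> carrier_mat q n" unfolding q_def by (rule stack_carrier[OF dcs])
  have "P @\<^sub>r stack n Ps = (N1 * D) @\<^sub>r (N2 * D)"
    using Cons.prems(3) unfolding NN append_rows_mult[OF N1 N2 D] by simp
  then have eqs: "P = N1 * D" "stack n Ps = N2 * D"
    using append_rows_inj[OF P _ S, of "N1 * D" "N2 * D"] N1 N2 D by auto
  have N2': "N2 \<in> carrier_mat (sum_list (map dim_row Ps)) p" using N2 unfolding q_def .
  have IH: "\<forall>P\<in>set Ps. \<exists>Q\<in>carrier_mat (dim_row P) p. P = Q * D"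
    by (rule Cons.IH[OF dcs N2' eqs(2)])
  show ?case
  proof
    fix P' assume "P' \<in> set (P # Ps)"
    then consider "P' = P" | "P' \<in> set Ps" by auto
    then show "\<exists>Q\<in>carrier_mat (dim_row P') p. P' = Q * D"
    proof cases
      case 1
      have d: "dim_row P' = h" unfolding 1 h_def ..
      have "P' = N1 * D" unfolding 1 by (rule eqs(1))
      moreover have "N1 \<in> carrier_mat (dim_row P') p" unfolding d by (rule N1)
      ultimately show ?thesis by blast
    next
      case 2
      show ?thesis by (rule bspec[OF IH 2])
    qed
  qed
qed

lemma stack_lincomb:
  assumes "\<forall>P\<in>set Ps. dim_col P = n" and "L \<in> carrier_mat r (sum_list (map dim_row Ps))"
  shows "\<exists>Ls. length Ls = length Ps \<and> (\<forall>i < length Ps. Ls ! i \<in> carrier_mat r (dim_row (Ps ! i))) \<and>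
     L * stack n Ps = foldr (+) (map (\<lambda>i. Ls ! i * Ps ! i) [0..<length Ps]) (0\<^sub>m r n)"
  using assms
proof (induction Ps arbitrary: L)
  case Nil
  show ?case by (intro exI[of _ "[]"]) (use Nil in \<open>auto intro!: eq_matI simp: scalar_prod_def\<close>)
next
  case (Cons P Ps)
  define h where "h = dim_row P"
  define q where "q = sum_list (map dim_row Ps)"
  have dcP: "dim_col P = n" by (rule bspec[OF Cons.prems(1)]) simp
  have dcs: "\<forall>P'\<in>set Ps. dim_col P' = n"
  proof
    fix P' assume "P' \<in> set Ps"
    then show "dim_col P' = n" by (intro bspec[OF Cons.prems(1)]) simp
  qed
  have L: "L \<in> carrier_mat r (h + q)" using Cons.prems(2) unfolding h_def q_def by simp
  define L1 where "L1 = mat r h (\<lambda>(i,j). L $$ (i,j))"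
  define L2 where "L2 = mat r q (\<lambda>(i,j). L $$ (i,j + h))"
  have L1: "L1 \<in> carrier_mat r h" and L2: "L2 \<in> carrier_mat r q" unfolding L1_def L2_def by auto
  have P: "P \<in> carrier_mat h n" unfolding h_def by (rule carrier_matI) (simp_all add: dcP)
  have S: "stack n Ps \<in> carrier_mat q n" unfolding q_def by (rule stack_carrier[OF dcs])
  have PS: "P @\<^sub>r stack n Ps \<in> carrier_mat (h + q) n" using P S by auto
  have split: "L * (P @\<^sub>r stack n Ps) = L1 * P + L2 * stack n Ps"
  proof (rule eq_matI)
    fix a b assume "a < dim_row (L1 * P + L2 * stack n Ps)" "b < dim_col (L1 * P + L2 * stack n Ps)"
    then have a: "a < r" and b: "b < n" using L2 S by auto
    let ?f = "\<lambda>k. L $$ (a,k) * (P @\<^sub>r stack n Ps) $$ (k,b)"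
    have "(L * (P @\<^sub>r stack n Ps)) $$ (a,b) = sum ?f {0..<h+q}"
      by (rule mult_entry[OF L PS a b])
    also have "\<dots> = sum ?f {0..<h} + sum ?f {h..<h+q}"
      by (rule sum.atLeastLessThan_concat[symmetric]) auto
    also have "sum ?f {h..<h+q} = sum (\<lambda>k. ?f (k + h)) {0..<q}"
      using sum.shift_bounds_nat_ivl[of ?f 0 h q] by (simp add: add.commute)
    also have "sum ?f {0..<h} = (\<Sum>k\<in>{0..<h}. L1 $$ (a,k) * P $$ (k,b))"
      by (rule sum.cong, simp, subst append_rows_index[OF P S]) (use a b in \<open>auto simp: L1_def\<close>)
    also have "sum (\<lambda>k. ?f (k + h)) {0..<q} = (\<Sum>k\<in>{0..<q}. L2 $$ (a,k) * stack n Ps $$ (k,b))"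
      by (rule sum.cong, simp, subst append_rows_index[OF P S]) (use a b in \<open>auto simp: L2_def\<close>)
    finally show "(L * (P @\<^sub>r stack n Ps)) $$ (a,b) = (L1 * P + L2 * stack n Ps) $$ (a,b)"
      using a b L1 L2 P S by (simp add: mult_entry[OF L1 P a b] mult_entry[OF L2 S a b])
  qed (use L L2 S PS in auto)
  obtain Ls where Ls: "length Ls = length Ps" "\<forall>i < length Ps. Ls ! i \<in> carrier_mat r (dim_row (Ps ! i))"
    "L2 * stack n Ps = foldr (+) (map (\<lambda>i. Ls ! i * Ps ! i) [0..<length Ps]) (0\<^sub>m r n)"
    using Cons.IH[OF dcs, of L2] L2 unfolding q_def by blast
  have up: "[0..<length (P#Ps)] = 0 # map Suc [0..<length Ps]"
  proof -
    have "[0..<Suc (length Ps)] = 0 # [Suc 0..<Suc (length Ps)]" by (rule upt_conv_Cons) simp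
    then show ?thesis by (simp add: map_Suc_upt del: upt_Suc)
  qed
  show ?case
  proof (intro exI[of _ "L1 # Ls"] conjI allI impI)
    show "length (L1 # Ls) = length (P # Ps)" using Ls(1) by simp
  next
    fix i assume "i < length (P # Ps)"
    then show "(L1 # Ls) ! i \<in> carrier_mat r (dim_row ((P # Ps) ! i))"
      using Ls(2) L1 unfolding h_def by (cases i) auto
  next
    have f: "foldr (+) (map (\<lambda>i. (L1 # Ls) ! i * (P # Ps) ! i) (0 # map Suc [0..<length Ps])) (0\<^sub>m r n)
      = L1 * P + foldr (+) (map (\<lambda>i. Ls ! i * Ps ! i) [0..<length Ps]) (0\<^sub>m r n)"
      by (simp only: list.map foldr_Cons map_map o_def nth_Cons_Suc nth_Cons_0)
    show "L * stack n (P # Ps) = foldr (+) (map (\<lambda>i. (L1 # Ls) ! i * (P # Ps) ! i) [0..<length (P # Ps)]) (0\<^sub>m r n)"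
      unfolding up f stack_Cons split Ls(3) ..
  qed
qed

lemma rank_outer_sum:
  fixes f :: "nat \<Rightarrow> nat \<Rightarrow> 'b::field" and g :: "nat \<Rightarrow> nat \<Rightarrow> 'b"
  assumes "finite J"
  shows "vec_space.rank nr (mat nr q (\<lambda>(a,b). \<Sum>i\<in>J. f a i * g i b)) \<le> card J"
  using assms
proof (induction J rule: finite_induct)
  case empty
  have e0: "mat nr q (\<lambda>(a,b). \<Sum>i\<in>{}. f a i * g i b) = 0\<^sub>m nr q" by (rule eq_matI) auto
  show ?case unfolding e0 by (simp add: vec_space.rank_0I)
next
  case (insert x J)
  have e: "mat nr q (\<lambda>(a,b). \<Sum>i\<in>insert x J. f a i * g i b) =
     mat nr q (\<lambda>(a,b). \<Sum>i\<in>J. f a i * g i b) + mat nr q (\<lambda>(a,b). f a x * g x b)"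
    by (rule eq_matI) (use insert in auto)
  have r1: "vec_space.rank nr (mat nr q (\<lambda>(a,b). f a x * g x b)) \<le> 1"
    by (rule vec_space.rank_le_1_product_entries[of _ nr q "\<lambda>a. f a x" "\<lambda>b. g x b"]) auto
  have "vec_space.rank nr (mat nr q (\<lambda>(a,b). \<Sum>i\<in>insert x J. f a i * g i b))
     \<le> vec_space.rank nr (mat nr q (\<lambda>(a,b). \<Sum>i\<in>J. f a i * g i b)) + vec_space.rank nr (mat nr q (\<lambda>(a,b). f a x * g x b))"
    unfolding e by (rule vec_space.rank_subadditive) auto
  then show ?case using r1 insert by simp
qed

lemma full_rank_cancel:
  fixes G :: "'b::field mat"
  assumes G: "G \<in> carrier_mat r n" and N: "N \<in> carrier_mat m r"
    and X: "X \<in> carrier_mat r r" and Y: "Y \<in> carrier_mat r r"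
    and XY: "X * G = Y * G" and rk: "vec_space.rank m (N * G) = r"
  shows "X = Y"
proof (rule ccontr)
  assume "X \<noteq> Y"
  then obtain i0 k0 where i0: "i0 < r" and k0: "k0 < r" and ne: "X $$ (i0,k0) \<noteq> Y $$ (i0,k0)"
    using X Y by (metis carrier_matD eq_matI)
  define \<mu> where "\<mu> i = X $$ (i0,i) - Y $$ (i0,i)" for i
  have mu0: "\<mu> k0 \<noteq> 0" using ne unfolding \<mu>_def by simp
  define J where "J = {0..<r} - {k0}"
  have split: "(\<Sum>i\<in>{0..<r}. h i) = h k0 + (\<Sum>i\<in>J. h i)" for h :: "nat \<Rightarrow> 'b"
    unfolding J_def using k0 by (simp add: sum.remove)
  have z: "\<mu> k0 * G $$ (k0,b) + (\<Sum>i\<in>J. \<mu> i * G $$ (i,b)) = 0" if b: "b < n" for b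
  proof -
    have "(X * G) $$ (i0,b) = (Y * G) $$ (i0,b)" using XY by simp
    then have "(\<Sum>i\<in>{0..<r}. X $$ (i0,i) * G $$ (i,b)) = (\<Sum>i\<in>{0..<r}. Y $$ (i0,i) * G $$ (i,b))"
      using mult_entry[OF X G i0 b] mult_entry[OF Y G i0 b] by simp
    then have "(\<Sum>i\<in>{0..<r}. \<mu> i * G $$ (i,b)) = 0"
      unfolding \<mu>_def by (simp add: left_diff_distrib sum_subtractf)
    then show ?thesis using split by simp
  qed
  define A' where "A' a i = N $$ (a,i) - N $$ (a,k0) * \<mu> i / \<mu> k0" for a i
  have eq: "N * G = mat m n (\<lambda>(a,b). \<Sum>i\<in>J. A' a i * G $$ (i,b))"
  proof (rule eq_matI)
    fix a b assume "a < dim_row (mat m n (\<lambda>(a,b). \<Sum>i\<in>J. A' a i * G $$ (i,b)))"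
      "b < dim_col (mat m n (\<lambda>(a,b). \<Sum>i\<in>J. A' a i * G $$ (i,b)))"
    then have a: "a < m" and b: "b < n" by auto
    have "(\<Sum>i\<in>J. A' a i * G $$ (i,b)) = (\<Sum>i\<in>J. N $$ (a,i) * G $$ (i,b))
       - (N $$ (a,k0) / \<mu> k0) * (\<Sum>i\<in>J. \<mu> i * G $$ (i,b))"
      unfolding A'_def by (simp add: sum_distrib_left sum_subtractf[symmetric] algebra_simps)
    also have "(\<Sum>i\<in>J. \<mu> i * G $$ (i,b)) = - (\<mu> k0 * G $$ (k0,b))" using z[OF b] by (simp add: eq_neg_iff_add_eq_0 add.commute)
    also have "(\<Sum>i\<in>J. N $$ (a,i) * G $$ (i,b)) - (N $$ (a,k0) / \<mu> k0) * - (\<mu> k0 * G $$ (k0,b))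
      = N $$ (a,k0) * G $$ (k0,b) + (\<Sum>i\<in>J. N $$ (a,i) * G $$ (i,b))" using mu0 by (simp add: field_simps)
    also have "\<dots> = (N * G) $$ (a,b)" using mult_entry[OF N G a b] split by simp
    finally show "(N * G) $$ (a,b) = mat m n (\<lambda>(a,b). \<Sum>i\<in>J. A' a i * G $$ (i,b)) $$ (a,b)" using a b by simp
  qed (use N G in auto)
  have "vec_space.rank m (N * G) \<le> card J" unfolding eq by (rule rank_outer_sum) (simp add: J_def)
  moreover have "card J = r - 1" unfolding J_def using k0 by simp
  ultimately show False using rk k0 by simp
qed

lemma to_fract_sum: "to_fract (sum f S) = (\<Sum>x\<in>S. to_fract (f x))"
  by (induction S rule: infinite_finite_induct) auto

lemma map_to_fract_mult:
  assumes A: "A \<in> carrier_mat p k" and B: "B \<in> carrier_mat k q"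
  shows "map_mat to_fract (A * B) = map_mat to_fract A * map_mat to_fract B"
proof (rule eq_matI)
  fix i j assume "i < dim_row (map_mat to_fract A * map_mat to_fract B)" "j < dim_col (map_mat to_fract A * map_mat to_fract B)"
  then have i: "i < p" and j: "j < q" using A B by auto
  have A': "map_mat to_fract A \<in> carrier_mat p k" and B': "map_mat to_fract B \<in> carrier_mat k q" using A B by auto
  show "map_mat to_fract (A * B) $$ (i,j) = (map_mat to_fract A * map_mat to_fract B) $$ (i,j)"
    using mult_entry[OF A B i j] mult_entry[OF A' B' i j] i j A B by (simp add: to_fract_sum)
qed (use A B in auto)

lemma map_to_fract_inj:
  assumes "A \<in> carrier_mat p q" "B \<in> carrier_mat p q" "map_mat to_fract A = map_mat to_fract B"
  shows "A = B"
proof (rule eq_matI)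
  fix i j assume "i < dim_row B" "j < dim_col B"
  then have i: "i < p" and j: "j < q" using assms by auto
  have 1: "map_mat to_fract A $$ (i,j) = to_fract (A$$(i,j))" using assms(1) i j by simp
  have 2: "map_mat to_fract B $$ (i,j) = to_fract (B$$(i,j))" using assms(2) i j by simp
  have "to_fract (A$$(i,j)) = to_fract (B$$(i,j))" using 1 2 assms(3) by metis
  then show "A $$ (i,j) = B $$ (i,j)" by simp
qed (use assms in auto)

definition Tm :: "nat \<Rightarrow> nat \<Rightarrow> 'a::comm_ring_1 mat" where
  "Tm m r = mat m r (\<lambda>(i,j). if i = j then 1 else 0)"

lemma Tm_carrier[simp]: "Tm m r \<in> carrier_mat m r" unfolding Tm_def by simp

lemma Tm_mult:
  assumes G: "G \<in> carrier_mat r n" and rm: "r \<le> m"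
  shows "Tm m r * G = G @\<^sub>r 0\<^sub>m (m - r) n"
proof (rule eq_matI)
  have Z: "0\<^sub>m (m - r) n \<in> carrier_mat (m - r) n" by simp
  fix a b assume "a < dim_row (G @\<^sub>r 0\<^sub>m (m - r) n)" "b < dim_col (G @\<^sub>r 0\<^sub>m (m - r) n)"
  moreover have GZ: "G @\<^sub>r 0\<^sub>m (m - r) n \<in> carrier_mat (r + (m - r)) n" using G Z by blast
  ultimately have a: "a < m" and a': "a < r + (m - r)" and b: "b < n" using rm by auto
  have "(Tm m r * G) $$ (a,b) = (\<Sum>k\<in>{0..<r}. Tm m r $$ (a,k) * G $$ (k,b))"
    by (rule mult_entry[OF Tm_carrier G a b])
  also have "\<dots> = (if a < r then G $$ (a,b) else 0)"
  proof (cases "a < r")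
    case True
    have "(\<Sum>k\<in>{0..<r}. Tm m r $$ (a,k) * G $$ (k,b)) = Tm m r $$ (a,a) * G $$ (a,b)"
      by (rule sum_single_nz) (use True a in \<open>auto simp: Tm_def\<close>)
    then show ?thesis using True a by (simp add: Tm_def)
  next
    case False
    have "(\<Sum>k\<in>{0..<r}. Tm m r $$ (a,k) * G $$ (k,b)) = 0"
      by (rule sum.neutral) (use False a in \<open>auto simp: Tm_def\<close>)
    then show ?thesis using False by simp
  qed
  also have "\<dots> = (G @\<^sub>r 0\<^sub>m (m - r) n) $$ (a,b)"
    using append_rows_index[OF G Z a' b] a b by simp
  finally show "(Tm m r * G) $$ (a,b) = (G @\<^sub>r 0\<^sub>m (m - r) n) $$ (a,b)" .
qed (use G rm in \<open>auto simp: Tm_def append_rows_def\<close>)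

lemma Tm_TT:
  assumes rm: "r \<le> m"
  shows "Tm r m * Tm m r = (1\<^sub>m r :: 'a::comm_ring_1 mat)"
proof (rule eq_matI)
  fix a b assume "a < dim_row (1\<^sub>m r :: 'a mat)" "b < dim_col (1\<^sub>m r :: 'a mat)"
  then have a: "a < r" and b: "b < r" by auto
  have "(Tm r m * Tm m r) $$ (a,b) = (\<Sum>k\<in>{0..<m}. Tm r m $$ (a,k) * Tm m r $$ (k,b) :: 'a)"
    by (rule mult_entry[OF Tm_carrier Tm_carrier a b])
  also have "\<dots> = Tm r m $$ (a,a) * Tm m r $$ (a,b)"
    by (rule sum_single_nz) (use a b rm in \<open>auto simp: Tm_def\<close>)
  finally show "(Tm r m * Tm m r) $$ (a,b) = (1\<^sub>m r :: 'a mat) $$ (a,b)" using a b rm by (simp add: Tm_def)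
qed (auto simp: Tm_def)

lemma bchoice_mat:
  assumes "\<forall>P\<in>set Ps. \<exists>Q\<in>carrier_mat (dim_row P) p. P = Q * D"
  shows "\<exists>Qf. \<forall>P\<in>set Ps. Qf P \<in> carrier_mat (dim_row P) p \<and> P = Qf P * D"
proof -
  have "\<forall>P\<in>set Ps. \<exists>Q. Q \<in> carrier_mat (dim_row P) p \<and> P = Q * D" using assms by blast
  then show ?thesis by (rule bchoice)
qed

lemma stack_map_props:
  assumes Qf: "\<forall>P\<in>set Ps. Qf P \<in> carrier_mat (dim_row P) p \<and> P = Qf P * D" and D: "D \<in> carrier_mat p n"
  shows "stack p (map Qf Ps) \<in> carrier_mat (sum_list (map dim_row Ps)) p"
    "stack n Ps = stack p (map Qf Ps) * D"
proof -
  have dc: "\<forall>X\<in>set (map Qf Ps). dim_col X = p"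
  proof
    fix X assume "X \<in> set (map Qf Ps)"
    then obtain P' where P': "P' \<in> set Ps" "X = Qf P'" by auto
    have "Qf P' \<in> carrier_mat (dim_row P') p" by (rule conjunct1[OF bspec[OF Qf P'(1)]])
    then show "dim_col X = p" using P' by simp
  qed
  have eqm: "map dim_row (map Qf Ps) = map dim_row Ps"
  proof -
    have "map (dim_row \<circ> Qf) Ps = map dim_row Ps"
    proof (rule map_cong)
      fix x assume "x \<in> set Ps"
      have "Qf x \<in> carrier_mat (dim_row x) p" by (rule conjunct1[OF bspec[OF Qf \<open>x \<in> set Ps\<close>]])
      then show "(dim_row \<circ> Qf) x = dim_row x" by simp
    qed simp
    then show ?thesis by simp
  qed
  show "stack p (map Qf Ps) \<in> carrier_mat (sum_list (map dim_row Ps)) p"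
    by (rule stack_carrier[OF dc, unfolded eqm])
  show "stack n Ps = stack p (map Qf Ps) * D" by (rule stack_mult[OF Qf D])
qed

lemma C_to_2:
  fixes Ps :: "'a::field poly mat list"
  assumes dc: "\<forall>P\<in>set Ps. dim_col P = n" and m: "m = sum_list (map dim_row Ps)"
    and r: "r = normal_rank (stack n Ps)" and Gc: "G \<in> carrier_mat r n" and C: "is_compact_GCRD n Ps G"
  shows "\<exists>N\<in>carrier_mat m r. \<exists>L\<in>carrier_mat r m. L * N = 1\<^sub>m r \<and> stack n Ps = N * G"
proof -
  define P where "P = stack n Ps"
  have Pc: "P \<in> carrier_mat m n" unfolding P_def m by (rule stack_carrier[OF dc])
  from C have crd: "is_CRD n Ps G"
    and gcrd: "\<forall>D. is_CRD n Ps D \<longrightarrow> (\<exists>Q\<in>carrier_mat (dim_row G) (dim_row D). G = Q * D)"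
    unfolding is_compact_GCRD_def is_GCRD_def by blast+
  have dG: "dim_row G = r" using Gc by simp
  from crd have "\<forall>P\<in>set Ps. \<exists>Q\<in>carrier_mat (dim_row P) (dim_row G). P = Q * G"
    unfolding is_CRD_def by blast
  then have "\<forall>P\<in>set Ps. \<exists>Q\<in>carrier_mat (dim_row P) r. P = Q * G" unfolding dG .
  from bchoice_mat[OF this] obtain Qf where Qf: "\<forall>P\<in>set Ps. Qf P \<in> carrier_mat (dim_row P) r \<and> P = Qf P * G"
    by blast
  define N where "N = stack r (map Qf Ps)"
  have Nc: "N \<in> carrier_mat m r" unfolding N_def m by (rule stack_map_props(1)[OF Qf Gc])
  have PN: "P = N * G" unfolding N_def P_def by (rule stack_map_props(2)[OF Qf Gc])
  have one: "1\<^sub>m m \<in> carrier_mat (sum_list (map dim_row Ps)) m" using m by simp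
  have "stack n Ps = 1\<^sub>m m * P" using Pc unfolding P_def by simp
  then have "\<forall>P'\<in>set Ps. \<exists>Q\<in>carrier_mat (dim_row P') m. P' = Q * P"
    by (intro stack_split[OF dc one Pc])
  moreover have dP: "dim_row P = m" "dim_col P = n" using Pc by auto
  ultimately have crdP: "is_CRD n Ps P" unfolding is_CRD_def dP(1) by blast
  from gcrd crdP have "\<exists>Q\<in>carrier_mat (dim_row G) (dim_row P). G = Q * P" by blast
  then obtain Q where Qc: "Q \<in> carrier_mat r m" and GQ: "G = Q * P" unfolding dG dP(1) by blast
  have QNG: "(Q * N) * G = G"
    using GQ PN Qc Nc Gc by (simp add: assoc_mult_mat[of Q r m N r G n])
  define F where "F = (map_mat to_fract :: 'a poly mat \<Rightarrow> 'a poly fract mat)"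
  have FQN: "F (Q * N) = F Q * F N" unfolding F_def by (rule map_to_fract_mult[OF Qc Nc])
  have "F (Q * N) * F G = F G"
    unfolding F_def by (subst map_to_fract_mult[symmetric, of _ r r], use Qc Nc Gc QNG in auto)
  also have "F G = F (1\<^sub>m r) * F G"
    unfolding F_def by (subst map_to_fract_mult[symmetric, of _ r r], use Gc in auto)
  finally have eq: "F (Q * N) * F G = F (1\<^sub>m r) * F G" .
  have rk: "vec_space.rank m (F N * F G) = r"
  proof -
    have "F N * F G = F P" unfolding F_def PN by (rule map_to_fract_mult[OF Nc Gc, symmetric])
    moreover have "r = vec_space.rank m (F P)" using r Pc unfolding normal_rank_def F_def P_def by simp
    ultimately show ?thesis by simp
  qed
  have "F (Q * N) = F (1\<^sub>m r)"
    by (rule full_rank_cancel[of "F G" r n "F N" m, OF _ _ _ _ eq rk]) (use Gc Nc Qc in \<open>auto simp: F_def\<close>)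
  then have QN: "Q * N = 1\<^sub>m r" unfolding F_def by (rule map_to_fract_inj[of _ r r, rotated 2]) (use Qc Nc in auto)
  show ?thesis using Nc Qc QN PN unfolding P_def by blast
qed

lemma two_to_C:
  fixes Ps :: "'a::field poly mat list"
  assumes dc: "\<forall>P\<in>set Ps. dim_col P = n" and m: "m = sum_list (map dim_row Ps)"
    and r: "r = normal_rank (stack n Ps)" and Gc: "G \<in> carrier_mat r n"
    and Nc: "N \<in> carrier_mat m r" and Lc: "L \<in> carrier_mat r m" and LN: "L * N = 1\<^sub>m r"
    and PN: "stack n Ps = N * G"
  shows "is_compact_GCRD n Ps G"
proof -
  have Nc': "N \<in> carrier_mat (sum_list (map dim_row Ps)) r" using Nc m by simp
  have "\<forall>P\<in>set Ps. \<exists>Q\<in>carrier_mat (dim_row P) r. P = Q * G" by (rule stack_split[OF dc Nc' Gc PN])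
  moreover have dG: "dim_row G = r" "dim_col G = n" using Gc by auto
  ultimately have crd: "is_CRD n Ps G" unfolding is_CRD_def dG(1) by blast
  have "\<exists>Q\<in>carrier_mat (dim_row G) (dim_row D). G = Q * D" if D: "is_CRD n Ps D" for D
  proof -
    define p where "p = dim_row D"
    have "dim_col D = n" using D unfolding is_CRD_def by blast
    then have Dc: "D \<in> carrier_mat p n" unfolding p_def by (intro carrier_matI) auto
    have "\<forall>P\<in>set Ps. \<exists>Q\<in>carrier_mat (dim_row P) p. P = Q * D" using D unfolding is_CRD_def p_def by blast
    from bchoice_mat[OF this] obtain Qf where Qf: "\<forall>P\<in>set Ps. Qf P \<in> carrier_mat (dim_row P) p \<and> P = Qf P * D"
      by blast
    define Qd where "Qd = stack p (map Qf Ps)"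
    have Qdc: "Qd \<in> carrier_mat m p" unfolding Qd_def m by (rule stack_map_props(1)[OF Qf Dc])
    have PQ: "stack n Ps = Qd * D" unfolding Qd_def by (rule stack_map_props(2)[OF Qf Dc])
    have "G = (L * N) * G" using LN Gc by simp
    also have "\<dots> = L * (N * G)" by (rule assoc_mult_mat[OF Lc Nc Gc])
    also have "\<dots> = L * (Qd * D)" using PN PQ by simp
    also have "\<dots> = (L * Qd) * D" by (rule assoc_mult_mat[symmetric, OF Lc Qdc Dc])
    finally have "G = (L * Qd) * D" .
    moreover have "L * Qd \<in> carrier_mat (dim_row G) (dim_row D)" using Lc Qdc Gc unfolding p_def by auto
    ultimately show ?thesis by blast
  qed
  moreover have "dim_row G = normal_rank (stack n Ps)" using dG r by simp
  ultimately show ?thesis unfolding is_compact_GCRD_def is_GCRD_def using crd by blast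
qed

lemma two_to_3:
  fixes N :: "'a::field poly mat"
  assumes Nc: "N \<in> carrier_mat m r" and Lc: "L \<in> carrier_mat r m" and LN: "L * N = 1\<^sub>m r"
    and rm: "r \<le> m" and Gc: "G \<in> carrier_mat r n" and PN: "S = N * G"
  shows "\<exists>U\<in>carrier_mat m m. unimodular U \<and> S = U * (G @\<^sub>r 0\<^sub>m (m - r) n)"
proof -
  obtain V where V: "invm m V" and VN: "V * N = Tm m r"
    using left_inv_reduce[OF Nc Lc LN rm] unfolding Tm_def by blast
  from V obtain W where Vc: "V \<in> carrier_mat m m" and Wc: "W \<in> carrier_mat m m"
    and WV: "W * V = 1\<^sub>m m" unfolding invm_def by blast
  have "det W * det V = 1" using det_mult[OF Wc Vc] WV by simp
  then have dW: "det W \<noteq> 0" and dV: "det V \<noteq> 0" and "degree (det W * det V) = 0" by auto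
  then have deg: "degree (det W) = 0" by (simp add: degree_mult_eq)
  have uni: "unimodular W" unfolding unimodular_def using Wc dW deg by simp
  have "N = (W * V) * N" using WV Nc by simp
  also have "\<dots> = W * (V * N)" by (rule assoc_mult_mat[OF Wc Vc Nc])
  finally have NW: "N = W * Tm m r" unfolding VN .
  have "S = (W * Tm m r) * G" using PN NW by simp
  also have "\<dots> = W * (Tm m r * G)" by (rule assoc_mult_mat[OF Wc Tm_carrier Gc])
  also have "Tm m r * G = G @\<^sub>r 0\<^sub>m (m - r) n" by (rule Tm_mult[OF Gc rm])
  finally show ?thesis using Wc uni by blast
qed

lemma three_to_2:
  fixes U :: "'a::field poly mat"
  assumes Uc: "U \<in> carrier_mat m m" and uni: "unimodular U"
    and rm: "r \<le> m" and Gc: "G \<in> carrier_mat r n" and PU: "S = U * (G @\<^sub>r 0\<^sub>m (m - r) n)"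
  shows "\<exists>N\<in>carrier_mat m r. \<exists>L\<in>carrier_mat r m. L * N = 1\<^sub>m r \<and> S = N * G"
proof -
  define d where "d = coeff (det U) 0"
  have dz: "det U \<noteq> 0" and dg: "degree (det U) = 0" using uni unfolding unimodular_def by auto
  have dU: "det U = [:d:]" unfolding d_def using degree_0_id[OF dg] by simp
  have d0: "d \<noteq> 0" using dz dU by auto
  define c where "c = [:inverse d:]"
  have cd: "c * det U = 1" unfolding c_def dU using d0 by (simp add: one_pCons)
  define W where "W = c \<cdot>\<^sub>m adj_mat U"
  have adj: "adj_mat U \<in> carrier_mat m m" "adj_mat U * U = det U \<cdot>\<^sub>m 1\<^sub>m m" using adj_mat[OF Uc] by auto
  have Wc: "W \<in> carrier_mat m m" unfolding W_def using adj by simp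
  have WU: "W * U = 1\<^sub>m m"
  proof -
    have "W * U = c \<cdot>\<^sub>m (adj_mat U * U)" unfolding W_def by (rule mult_smult_assoc_mat[OF adj(1) Uc])
    also have "\<dots> = 1\<^sub>m m" unfolding adj(2) by (rule eq_matI) (use cd in \<open>auto simp: mult.assoc[symmetric]\<close>)
    finally show ?thesis .
  qed
  define N where "N = U * Tm m r"
  define L where "L = Tm r m * W"
  have Nc: "N \<in> carrier_mat m r" unfolding N_def using Uc by simp
  have Lc: "L \<in> carrier_mat r m" unfolding L_def by (rule mult_carrier_mat[OF Tm_carrier Wc])
  have UT: "U * Tm m r \<in> carrier_mat m r" by (rule mult_carrier_mat[OF Uc Tm_carrier])
  have "L * N = Tm r m * (W * (U * Tm m r))" unfolding L_def N_def
    by (rule assoc_mult_mat[OF Tm_carrier Wc UT])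
  also have "W * (U * Tm m r) = (W * U) * Tm m r" by (rule assoc_mult_mat[symmetric, OF Wc Uc Tm_carrier])
  also have "(W * U) * Tm m r = Tm m r" unfolding WU by (rule left_mult_one_mat[OF Tm_carrier])
  finally have LN: "L * N = 1\<^sub>m r" using Tm_TT[OF rm] by simp
  have "S = U * (Tm m r * G)" using PU Tm_mult[OF Gc rm] by simp
  also have "\<dots> = N * G" unfolding N_def by (rule assoc_mult_mat[symmetric, OF Uc Tm_carrier Gc])
  finally show ?thesis using Nc Lc LN by blast
qed

theorem theorem2p9:
  fixes Ps :: "'a::field poly mat list" and n m r :: nat and G :: "'a poly mat"
  assumes "Ps \<noteq> []"
    and "\<forall>P \<in> set Ps. dim_col P = n"
    and "m = sum_list (map dim_row Ps)"
    and "m \<ge> n"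
    and "r = normal_rank (stack n Ps)"
    and "r \<ge> 1"
    and "G \<in> carrier_mat r n"
  shows "(is_compact_GCRD n Ps G \<longleftrightarrow>
            (\<exists>N \<in> carrier_mat m r. left_invertible N \<and> stack n Ps = N * G))
       \<and> (is_compact_GCRD n Ps G \<longleftrightarrow>
            (\<exists>U \<in> carrier_mat m m. unimodular U \<and>
               stack n Ps = U * (G @\<^sub>r 0\<^sub>m (m - r) n)))
       \<and> (is_compact_GCRD n Ps G \<longrightarrow>
            (\<exists>Ls. length Ls = length Ps \<and>
               (\<forall>i < length Ps. Ls ! i \<in> carrier_mat r (dim_row (Ps ! i))) \<and>
               G = foldr (+) (map (\<lambda>i. Ls ! i * Ps ! i) [0..<length Ps]) (0\<^sub>m r n))
          \<and> (\<exists>L \<in> carrier_mat r m. G = L * stack n Ps))"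
proof -
  note dc = assms(2) and mdef = assms(3) and rdef = assms(5) and Gc = assms(7)
  have Sc: "stack n Ps \<in> carrier_mat m n" unfolding mdef by (rule stack_carrier[OF dc])
  have FSc: "map_mat to_fract (stack n Ps) \<in> carrier_mat m n" using Sc by simp
  have "r = vec_space.rank m (map_mat to_fract (stack n Ps))"
    using rdef Sc unfolding normal_rank_def by simp
  also have "\<dots> \<le> n" by (rule vec_space.rank_le_nc[OF FSc])
  finally have rm: "r \<le> m" using assms(4) by simp
  have C2: "is_compact_GCRD n Ps G \<longleftrightarrow> (\<exists>N \<in> carrier_mat m r. left_invertible N \<and> stack n Ps = N * G)"
  proof
    assume C: "is_compact_GCRD n Ps G"
    obtain N L where Nc: "N \<in> carrier_mat m r" and Lc: "L \<in> carrier_mat r m" and LN: "L * N = 1\<^sub>m r"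
      and SN: "stack n Ps = N * G"
      using C_to_2[OF dc mdef rdef Gc C] by blast
    have "left_invertible N" unfolding left_invertible_def using Nc Lc LN by auto
    then show "\<exists>N \<in> carrier_mat m r. left_invertible N \<and> stack n Ps = N * G" using Nc SN by blast
  next
    assume "\<exists>N \<in> carrier_mat m r. left_invertible N \<and> stack n Ps = N * G"
    then obtain N where Nc: "N \<in> carrier_mat m r" and li: "left_invertible N" and SN: "stack n Ps = N * G"
      by blast
    from li obtain L where Lc: "L \<in> carrier_mat r m" and LN: "L * N = 1\<^sub>m r"
      unfolding left_invertible_def using Nc by auto
    show "is_compact_GCRD n Ps G" by (rule two_to_C[OF dc mdef rdef Gc Nc Lc LN SN])
  qed
  have C3: "is_compact_GCRD n Ps G \<longleftrightarrow> (\<exists>U \<in> carrier_mat m m. unimodular U \<and>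
               stack n Ps = U * (G @\<^sub>r 0\<^sub>m (m - r) n))"
  proof
    assume C: "is_compact_GCRD n Ps G"
    obtain N L where Nc: "N \<in> carrier_mat m r" and Lc: "L \<in> carrier_mat r m" and LN: "L * N = 1\<^sub>m r"
      and SN: "stack n Ps = N * G"
      using C_to_2[OF dc mdef rdef Gc C] by blast
    show "\<exists>U \<in> carrier_mat m m. unimodular U \<and> stack n Ps = U * (G @\<^sub>r 0\<^sub>m (m - r) n)"
      by (rule two_to_3[OF Nc Lc LN rm Gc SN])
  next
    assume "\<exists>U \<in> carrier_mat m m. unimodular U \<and> stack n Ps = U * (G @\<^sub>r 0\<^sub>m (m - r) n)"
    then obtain U where Uc: "U \<in> carrier_mat m m" and uni: "unimodular U"
      and SU: "stack n Ps = U * (G @\<^sub>r 0\<^sub>m (m - r) n)" by blast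
    obtain N L where Nc: "N \<in> carrier_mat m r" and Lc: "L \<in> carrier_mat r m" and LN: "L * N = 1\<^sub>m r"
      and SN: "stack n Ps = N * G"
      using three_to_2[OF Uc uni rm Gc SU] by blast
    show "is_compact_GCRD n Ps G" by (rule two_to_C[OF dc mdef rdef Gc Nc Lc LN SN])
  qed
  have M: "(\<exists>Ls. length Ls = length Ps \<and>
               (\<forall>i < length Ps. Ls ! i \<in> carrier_mat r (dim_row (Ps ! i))) \<and>
               G = foldr (+) (map (\<lambda>i. Ls ! i * Ps ! i) [0..<length Ps]) (0\<^sub>m r n))
          \<and> (\<exists>L \<in> carrier_mat r m. G = L * stack n Ps)" if C: "is_compact_GCRD n Ps G"
  proof -
    obtain N L where Nc: "N \<in> carrier_mat m r" and Lc: "L \<in> carrier_mat r m" and LN: "L * N = 1\<^sub>m r"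
      and SN: "stack n Ps = N * G"
      using C_to_2[OF dc mdef rdef Gc C] by blast
    have "G = (L * N) * G" using LN Gc by simp
    also have "\<dots> = L * (N * G)" by (rule assoc_mult_mat[OF Lc Nc Gc])
    finally have GL: "G = L * stack n Ps" unfolding SN .
    have Lc': "L \<in> carrier_mat r (sum_list (map dim_row Ps))" using Lc mdef by simp
    obtain Ls where l1: "length Ls = length Ps" and l2: "\<forall>i < length Ps. Ls ! i \<in> carrier_mat r (dim_row (Ps ! i))"
      and l3: "L * stack n Ps = foldr (+) (map (\<lambda>i. Ls ! i * Ps ! i) [0..<length Ps]) (0\<^sub>m r n)"
      using stack_lincomb[OF dc Lc'] by blast
    have l4: "G = foldr (+) (map (\<lambda>i. Ls ! i * Ps ! i) [0..<length Ps]) (0\<^sub>m r n)"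
      using GL l3 by (rule trans)
    show ?thesis
    proof (rule conjI)
      show "\<exists>L \<in> carrier_mat r m. G = L * stack n Ps" using Lc GL by (rule bexI[rotated])
      show "\<exists>Ls. length Ls = length Ps \<and>
               (\<forall>i < length Ps. Ls ! i \<in> carrier_mat r (dim_row (Ps ! i))) \<and>
               G = foldr (+) (map (\<lambda>i. Ls ! i * Ps ! i) [0..<length Ps]) (0\<^sub>m r n)"
        using l1 l2 l4 by (intro exI[of _ Ls] conjI)
    qed
  qed
  show ?thesis
    apply (intro conjI impI)
      apply (rule C2)
     apply (rule C3)
    apply (erule M[THEN conjunct1])
    apply (erule M[THEN conjunct2])
    done
qed

end
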